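(* For real $\alpha\ge0$ and $\sigma^2>0$ let $\psi_1(\alpha,\sigma^2)=\int_0^{\pi/2}\frac{\alpha\sin^2\theta}{(\alpha^2\sin^2\theta+\sigma^2)^{1/2}}d\theta$. Then: (i) for each fixed $\sigma^2>0$, $\alpha\mapsto\psi_1(\alpha,\sigma^2)$ is concave and strictly increasing on $\alpha>0$; (ii) $0<\psi_1(\alpha,\sigma^2)\le1$ for all $\alpha>0,\sigma^2>0$; (iii) if $0<\sigma^2<\pi^2/16$, the equation $\alpha=\psi_1(\alpha,\sigma^2)$ has exactly two nonnegative solutions, $\alpha=0$ and $\alpha=F_1(\sigma^2)>0$, and $\alpha<\psi_1(\alpha,\sigma^2)<F_1(\sigma^2)$ for $\alpha\in(0,F_1(\sigma^2))$, while $F_1(\sigma^2)<\psi_1(\alpha,\sigma^2)<\alpha$ for $\alpha>F_1(\sigma^2)$. If $\sigma^2\ge\pi^2/16$, then $\alpha=0$ is the unique nonnegative solution, and $0<\psi_1(\alpha,\sigma^2)<\alpha$ for all $\alpha>0$. *)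

theory Defs
  imports "HOL-Analysis.Analysis"
begin

text \<open>psi1 a s, where s stands for sigma squared (s > 0).\<close>
definition psi1 :: "real \<Rightarrow> real \<Rightarrow> real" where
  "psi1 a s = integral {0..pi/2}
     (\<lambda>\<theta>. a * (sin \<theta>)^2 / sqrt (a^2 * (sin \<theta>)^2 + s))"

end

theory Submission
  imports Defs
begin




lemma int_sin2: "integral {0..pi/2} (\<lambda>t. (sin t)^2) = pi/4"
proof -
  have "((\<lambda>t. (sin t)^2) has_integral ((\<lambda>x. x/2 - sin x * cos x / 2) (pi/2) - (\<lambda>x. x/2 - sin x * cos x / 2) 0)) {0..pi/2}"
  proof (rule fundamental_theorem_of_calculus)
    show "0 \<le> pi/2" by simp
    fix x assume "x \<in> {0..pi/2}"
    have "((\<lambda>x. x/2 - sin x * cos x / 2) has_real_derivative (sin x)^2) (at x)"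
      apply (rule derivative_eq_intros refl | simp)+
      apply (simp add: power2_eq_square field_simps)
      using sin_cos_squared_add[of x] unfolding power2_eq_square by linarith
    then show "((\<lambda>x. x/2 - sin x * cos x / 2) has_vector_derivative (sin x)^2) (at x within {0..pi/2})"
      using has_real_derivative_iff_has_vector_derivative has_vector_derivative_at_within by blast
  qed
  then show ?thesis by (simp add: integral_unique)
qed

lemma int_sin: "integral {0..pi/2} (\<lambda>t. sin t) = 1"
proof -
  have "((\<lambda>t. sin t) has_integral ((\<lambda>x. - cos x) (pi/2) - (\<lambda>x. - cos x) 0)) {0..pi/2}"
  proof (rule fundamental_theorem_of_calculus)
    show "0 \<le> pi/2" by simp
    fix x assume "x \<in> {0..pi/2}"
    have "((\<lambda>x. - cos x) has_real_derivative sin x) (at x)"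
      by (rule derivative_eq_intros refl | simp)+
    then show "((\<lambda>x. - cos x) has_vector_derivative sin x) (at x within {0..pi/2})"
      using has_real_derivative_iff_has_vector_derivative has_vector_derivative_at_within by blast
  qed
  then show ?thesis by (simp add: integral_unique)
qed



lemma P2: "0 \<le> a \<Longrightarrow> a < b \<Longrightarrow> 0 < u \<Longrightarrow> 0 < (s::real) \<Longrightarrow> u/sqrt(b^2*u+s) < u/sqrt(a^2*u+s)"
proof -
  assume h: "0 \<le> a" "a < b" "0 < u" "0 < s"
  have "a^2 < b^2" using h by (simp add: power_strict_mono)
  hence "a^2*u+s < b^2*u+s" using h by simp
  hence "sqrt(a^2*u+s) < sqrt(b^2*u+s)" by simp
  moreover have "0 < sqrt(a^2*u+s)" using h by (simp add: add_nonneg_pos)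
  ultimately show ?thesis using h by (metis divide_strict_left_mono mult_pos_pos order.strict_trans)
qed

lemma P1: "0 \<le> a \<Longrightarrow> a < b \<Longrightarrow> 0 < u \<Longrightarrow> 0 < (s::real) \<Longrightarrow> a*u/sqrt(a^2*u+s) < b*u/sqrt(b^2*u+s)"
proof -
  assume h: "0 \<le> a" "a < b" "0 < u" "0 < s"
  have pa: "0 < sqrt(a^2*u+s)" using h by (simp add: add_nonneg_pos)
  have pb: "0 < sqrt(b^2*u+s)" using h by (simp add: add_nonneg_pos)
  have "a^2 < b^2" using h by (simp add: power_strict_mono)
  hence "a^2* s < b^2* s" using h by simp
  hence "a^2*(b^2*u+s) < b^2*(a^2*u+s)" by (simp add: algebra_simps)
  hence "sqrt(a^2*(b^2*u+s)) < sqrt(b^2*(a^2*u+s))" by simp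
  hence "a* sqrt(b^2*u+s) < b* sqrt(a^2*u+s)" using h by (simp add: real_sqrt_mult)
  hence "a*u* sqrt(b^2*u+s) < b*u* sqrt(a^2*u+s)" using h
    by (simp add: mult.assoc mult.commute mult.left_commute)
  thus ?thesis using pa pb by (simp add: divide_less_eq less_divide_eq mult.commute mult.left_commute)
qed

lemma P3: "0 \<le> a \<Longrightarrow> 0 \<le> w \<Longrightarrow> 0 < (s::real) \<Longrightarrow> a*w^2/sqrt(a^2*w^2+s) \<le> w"
proof -
  assume h: "0 \<le> a" "0 \<le> w" "0 < s"
  have p: "0 < sqrt(a^2*w^2+s)" using h by (simp add: add_nonneg_pos)
  have "a*w = sqrt((a*w)^2)" using h by simp
  also have "... \<le> sqrt(a^2*w^2+s)" using h by (simp add: power_mult_distrib)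
  finally have "a*w*w \<le> sqrt(a^2*w^2+s) * w" using h(2) by (rule mult_right_mono)
  thus ?thesis using p by (simp add: divide_le_eq power2_eq_square mult.commute mult.left_commute)
qed

lemma P4: "u \<le> 1 \<Longrightarrow> 0 \<le> u \<Longrightarrow> 0 < (s::real) \<Longrightarrow> u/sqrt(a^2+s) \<le> u/sqrt(a^2*u+s)"
proof -
  assume h: "u \<le> 1" "0 \<le> u" "0 < s"
  have "a^2*u \<le> a^2" using h by (simp add: mult_left_le)
  hence "sqrt(a^2*u+s) \<le> sqrt(a^2+s)" by simp
  moreover have "0 < sqrt(a^2*u+s)" using h by (simp add: add_nonneg_pos)
  ultimately show ?thesis using h by (simp add: divide_left_mono)
qed



lemma P5: assumes u: "0 \<le> u" and s: "0 < (s::real)"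
  shows "concave_on {0<..} (\<lambda>a. a*u/sqrt(a^2*u+s))"
  unfolding concave_on_def
proof (rule convex_on_realI[where f'="\<lambda>x. -(u* s/((x^2*u+s) * sqrt(x^2*u+s)))"])
  show "connected ({0<..}::real set)" by simp
next
  fix x :: real assume x: "x \<in> {0<..}"
  have D: "0 < x^2*u+s" using u s by (simp add: add_nonneg_pos)
  hence sD: "0 < sqrt(x^2*u+s)" by simp
  have "((\<lambda>a. -(a*u/sqrt(a^2*u+s))) has_real_derivative
      -((u * sqrt(x^2*u+s) - x*u*(inverse (sqrt (x^2*u+s)) / 2 * (2*x*u))) / (sqrt(x^2*u+s))^2)) (at x)"
    using D by (auto intro!: derivative_eq_intros simp: power2_eq_square)
  moreover have "(u * sqrt(x^2*u+s) - x*u*(inverse (sqrt (x^2*u+s)) / 2 * (2*x*u))) / (sqrt(x^2*u+s))^2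
     = u* s/((x^2*u+s) * sqrt(x^2*u+s))"
    using D sD by (simp add: field_simps power2_eq_square)
  ultimately show "((\<lambda>a. -(a*u/sqrt(a^2*u+s))) has_real_derivative -(u* s/((x^2*u+s) * sqrt(x^2*u+s)))) (at x)"
    by simp
next
  fix x y :: real assume x: "x \<in> {0<..}" and y: "y \<in> {0<..}" and xy: "x \<le> y"
  have Dx: "0 < x^2*u+s" using u s by (simp add: add_nonneg_pos)
  have "x^2 \<le> y^2" using x xy by (simp add: power_mono)
  hence Dxy: "x^2*u+s \<le> y^2*u+s" using u by (simp add: mult_right_mono)
  hence "sqrt(x^2*u+s) \<le> sqrt(y^2*u+s)" by simp
  hence "(x^2*u+s) * sqrt(x^2*u+s) \<le> (y^2*u+s) * sqrt(y^2*u+s)"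
    using Dx Dxy by (simp add: mult_mono)
  moreover have "0 < (x^2*u+s) * sqrt(x^2*u+s)" using Dx by simp
  moreover have "0 \<le> u* s" using u s by simp
  ultimately have "u* s/((y^2*u+s) * sqrt(y^2*u+s)) \<le> u* s/((x^2*u+s) * sqrt(x^2*u+s))"
    by (simp add: divide_left_mono)
  thus "-(u* s/((x^2*u+s) * sqrt(x^2*u+s))) \<le> -(u* s/((y^2*u+s) * sqrt(y^2*u+s)))" by simp
qed


lemma posD: "0 < (s::real) \<Longrightarrow> 0 < a^2*(sin t)^2 + s"
  by (simp add: add_nonneg_pos)

lemma posN: "0 < (s::real) \<Longrightarrow> a^2*(sin t)^2 + s \<noteq> 0"
  using posD[of s a t] by linarith

lemma contg: "0 < (s::real) \<Longrightarrow> continuous_on {0..pi/2} (\<lambda>t. a * (sin t)^2 / sqrt (a^2 * (sin t)^2 + s))"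
  by (intro continuous_intros) (auto simp: posN)

lemma conth: "0 < (s::real) \<Longrightarrow> continuous_on {0..pi/2} (\<lambda>t. (sin t)^2 / sqrt (a^2 * (sin t)^2 + s))"
  by (intro continuous_intros) (auto simp: posN)

lemma intg: "0 < (s::real) \<Longrightarrow> (\<lambda>t. a * (sin t)^2 / sqrt (a^2 * (sin t)^2 + s)) integrable_on {0..pi/2}"
  using contg integrable_continuous_interval by blast

lemma inth: "0 < (s::real) \<Longrightarrow> (\<lambda>t. (sin t)^2 / sqrt (a^2 * (sin t)^2 + s)) integrable_on {0..pi/2}"
  using conth integrable_continuous_interval by blast

lemma sin_pos_open: "t \<in> {0<..<pi/2} \<Longrightarrow> 0 < (sin t)^2"
proof -
  assume "t \<in> {0<..<pi/2}"
  hence "0 < t" "t < pi" by auto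
  hence "0 < sin t" by (rule sin_gt_zero)
  thus ?thesis by simp
qed

lemma psi_mono: assumes "0 < s" "0 \<le> a" "a < b" shows "psi1 a s < psi1 b s"
  unfolding psi1_def
proof (rule integral_less_real)
  show "continuous_on {0..pi/2} (\<lambda>t. a * (sin t)^2 / sqrt (a^2 * (sin t)^2 + s))" using assms contg by blast
  show "continuous_on {0..pi/2} (\<lambda>t. b * (sin t)^2 / sqrt (b^2 * (sin t)^2 + s))" using assms contg by blast
  show "{0<..<pi/2} \<noteq> {}" using pi_gt_zero by (simp add: not_le)
  fix t assume "t \<in> {0<..<pi/2}"
  thus "a * (sin t)^2 / sqrt (a^2 * (sin t)^2 + s) < b * (sin t)^2 / sqrt (b^2 * (sin t)^2 + s)"
    using P1[OF assms(2,3) sin_pos_open assms(1)] by simp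
qed

lemma psi0: "psi1 0 s = 0" by (simp add: psi1_def)

lemma psi_le1: assumes "0 < s" "0 \<le> a" shows "psi1 a s \<le> 1"
proof -
  have "psi1 a s \<le> integral {0..pi/2} (\<lambda>t. sin t)"
    unfolding psi1_def
  proof (rule integral_le)
    show "(\<lambda>t. a * (sin t)^2 / sqrt (a^2 * (sin t)^2 + s)) integrable_on {0..pi/2}" using assms intg by blast
    show "(\<lambda>t. sin t) integrable_on {0..pi/2}" by (intro integrable_continuous_interval continuous_intros)
    fix t assume "t \<in> {0..pi/2}"
    hence "0 \<le> sin t" by (simp add: sin_ge_zero)
    thus "a * (sin t)^2 / sqrt (a^2 * (sin t)^2 + s) \<le> sin t" using P3 assms by blast
  qed
  thus ?thesis using int_sin by simp
qed

definition hh :: "real \<Rightarrow> real \<Rightarrow> real" where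
  "hh a s = integral {0..pi/2} (\<lambda>t. (sin t)^2 / sqrt (a^2 * (sin t)^2 + s))"

lemma psi_eq: "psi1 a s = a * hh a s"
proof -
  have "a * hh a s = integral {0..pi/2} (\<lambda>t. a * ((sin t)^2 / sqrt (a^2 * (sin t)^2 + s)))"
    unfolding hh_def by (rule integral_mult_right[symmetric])
  also have "... = psi1 a s" unfolding psi1_def by simp
  finally show ?thesis by simp
qed

lemma hh_strict: assumes "0 < s" "0 \<le> a" "a < b" shows "hh b s < hh a s"
  unfolding hh_def
proof (rule integral_less_real)
  show "continuous_on {0..pi/2} (\<lambda>t. (sin t)^2 / sqrt (a^2 * (sin t)^2 + s))" using assms conth by blast
  show "continuous_on {0..pi/2} (\<lambda>t. (sin t)^2 / sqrt (b^2 * (sin t)^2 + s))" using assms conth by blast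
  show "{0<..<pi/2} \<noteq> {}" using pi_gt_zero by (simp add: not_le)
  fix t assume "t \<in> {0<..<pi/2}"
  thus "(sin t)^2 / sqrt (b^2 * (sin t)^2 + s) < (sin t)^2 / sqrt (a^2 * (sin t)^2 + s)"
    using P2[OF assms(2,3) sin_pos_open assms(1)] by simp
qed

lemma hh0: "hh 0 s = (pi/4) / sqrt s"
  unfolding hh_def by (simp add: int_sin2)

lemma hh_lower: assumes "0 < s" shows "(pi/4) / sqrt (a^2+s) \<le> hh a s"
proof -
  have "integral {0..pi/2} (\<lambda>t. (sin t)^2 / sqrt (a^2+s)) \<le> hh a s"
    unfolding hh_def
  proof (rule integral_le)
    show "(\<lambda>t. (sin t)^2 / sqrt (a^2 * (sin t)^2 + s)) integrable_on {0..pi/2}" using assms inth by blast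
    have "a^2+s \<noteq> 0" using assms by (metis add_nonneg_pos zero_le_power2 less_irrefl)
    thus "(\<lambda>t. (sin t)^2 / sqrt (a^2+s)) integrable_on {0..pi/2}" by (intro integrable_continuous_interval continuous_intros) auto
    fix t assume "t \<in> {0..pi/2}"
    have "(sin t)^2 \<le> 1" using abs_sin_le_one[of t] by (simp add: abs_square_le_1)
    thus "(sin t)^2 / sqrt (a^2+s) \<le> (sin t)^2 / sqrt (a^2 * (sin t)^2 + s)"
      using P4 assms by simp
  qed
  thus ?thesis using int_sin2 by simp
qed

lemma psi_concave: assumes s: "0 < s" shows "concave_on {0<..} (\<lambda>a. psi1 a s)"
proof (rule concave_on_linorderI)
  show "convex ({0<..}::real set)" by simp
  fix t x y :: real assume t: "0 < t" "t < 1" and x: "x \<in> {0<..}" and y: "y \<in> {0<..}" and "x < y"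
  let ?g = "\<lambda>a t. a * (sin t)^2 / sqrt (a^2 * (sin t)^2 + s)"
  have i1: "(\<lambda>th. (1-t) * ?g x th) integrable_on {0..pi/2}" using integrable_cmul[OF intg[OF s], of "1-t" x] by simp
  have i2: "(\<lambda>th. t * ?g y th) integrable_on {0..pi/2}" using integrable_cmul[OF intg[OF s], of "t" y] by simp
  have "integral {0..pi/2} (\<lambda>th. (1-t) * ?g x th + t * ?g y th) \<le> integral {0..pi/2} (?g ((1-t)*x + t*y))"
  proof (rule integral_le)
    show "(\<lambda>th. (1-t) * ?g x th + t * ?g y th) integrable_on {0..pi/2}"
      using integrable_add[OF i1 i2] .
    show "?g ((1-t)*x + t*y) integrable_on {0..pi/2}" using intg[OF s] by blast
    fix th :: real
    have "0 \<le> (sin th)^2" by simp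
    from concave_onD[OF P5[OF this s], of t x y] t x y
    show "(1-t) * ?g x th + t * ?g y th \<le> ?g ((1-t)*x + t*y) th" by simp
  qed
  moreover have "integral {0..pi/2} (\<lambda>th. (1-t) * ?g x th + t * ?g y th) = (1-t) * psi1 x s + t * psi1 y s"
    unfolding psi1_def Henstock_Kurzweil_Integration.integral_add[OF i1 i2] integral_mult_right ..
  ultimately show "(1 - t) * psi1 x s + t * psi1 y s \<le> psi1 ((1 - t) *\<^sub>R x + t *\<^sub>R y) s"
    unfolding psi1_def by simp
qed

lemma psi_cont: assumes s: "0 < s" shows "continuous_on {0<..} (\<lambda>a. psi1 a s)"
proof -
  have "continuous_on {0<..} (\<lambda>a. - psi1 a s)"
    using psi_concave[OF s] by (intro convex_on_continuous) (auto simp: concave_on_def)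
  from continuous_on_minus[OF this] show ?thesis by simp
qed



theorem mainTheorem9:
  shows "(\<forall>s::real. s > 0 \<longrightarrow>
            concave_on {0<..} (\<lambda>a. psi1 a s) \<and> strict_mono_on {0<..} (\<lambda>a. psi1 a s))
       \<and> (\<forall>a s::real. a > 0 \<and> s > 0 \<longrightarrow> 0 < psi1 a s \<and> psi1 a s \<le> 1)
       \<and> (\<forall>s::real. 0 < s \<and> s < pi^2/16 \<longrightarrow>
            (\<exists>F>0. {a. a \<ge> 0 \<and> a = psi1 a s} = {0, F}
               \<and> (\<forall>a. 0 < a \<and> a < F \<longrightarrow> a < psi1 a s \<and> psi1 a s < F)
               \<and> (\<forall>a. a > F \<longrightarrow> F < psi1 a s \<and> psi1 a s < a)))
       \<and> (\<forall>s::real. s \<ge> pi^2/16 \<longrightarrow>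
            {a. a \<ge> 0 \<and> a = psi1 a s} = {0}
            \<and> (\<forall>a. a > 0 \<longrightarrow> 0 < psi1 a s \<and> psi1 a s < a))"
  proof -
  have fix_iff: "\<And>a s. 0 < a \<Longrightarrow> (a = psi1 a s \<longleftrightarrow> hh a s = 1)"
    by (simp add: psi_eq)
  have gt: "\<And>a s. 0 < a \<Longrightarrow> 1 < hh a s \<Longrightarrow> a < psi1 a s"
    by (simp add: psi_eq)
  have lt: "\<And>a s. 0 < a \<Longrightarrow> hh a s < 1 \<Longrightarrow> psi1 a s < a"
    by (simp add: psi_eq)
  have A: "\<forall>s::real. s > 0 \<longrightarrow>
            concave_on {0<..} (\<lambda>a. psi1 a s) \<and> strict_mono_on {0<..} (\<lambda>a. psi1 a s)"
    using psi_concave psi_mono unfolding strict_mono_on_def by auto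
  have B: "\<forall>a s::real. a > 0 \<and> s > 0 \<longrightarrow> 0 < psi1 a s \<and> psi1 a s \<le> 1"
    using psi_mono[of _ 0] psi0 psi_le1 by fastforce
  have C: "\<forall>s::real. 0 < s \<and> s < pi^2/16 \<longrightarrow>
            (\<exists>F>0. {a. a \<ge> 0 \<and> a = psi1 a s} = {0, F}
               \<and> (\<forall>a. 0 < a \<and> a < F \<longrightarrow> a < psi1 a s \<and> psi1 a s < F)
               \<and> (\<forall>a. a > F \<longrightarrow> F < psi1 a s \<and> psi1 a s < a))"
  proof (intro allI impI)
    fix s :: real assume hs: "0 < s \<and> s < pi^2/16"
    hence s0: "0 < s" by simp
    define a0 where "a0 = sqrt ((pi^2/16 - s)/2)"
    have a0pos: "0 < a0" unfolding a0_def using hs by simp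
    have a0sq: "a0^2 = (pi^2/16 - s)/2" unfolding a0_def using hs by simp
    have "a0^2 + s < (pi/4)^2" using a0sq hs by (simp add: power_divide)
    hence "sqrt (a0^2+s) < sqrt ((pi/4)^2)" by (rule real_sqrt_less_mono)
    hence sq: "sqrt (a0^2+s) < pi/4" by simp
    have "0 < sqrt (a0^2+s)" using s0 by (simp add: add_nonneg_pos)
    hence "1 < (pi/4) / sqrt (a0^2+s)" using sq by simp
    hence "1 < hh a0 s" using hh_lower[OF s0, of a0] by linarith
    hence pa0: "a0 < psi1 a0 s" using gt a0pos by blast
    have "pi^2 < 4^2" by (rule power_strict_mono) (use pi_less_4 pi_gt_zero in auto)
    hence "a0^2 < 1^2" using a0sq hs by simp
    hence "a0 < 1" using power2_less_imp_less[of a0 1] by simp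
    hence a02: "a0 \<le> 2" by simp
    have p2: "psi1 2 s < 2" using psi_le1[OF s0, of 2] by simp
    have cont: "continuous_on {a0..2} (\<lambda>a. a - psi1 a s)"
      apply (intro continuous_intros)
      apply (rule continuous_on_subset[OF psi_cont[OF s0]])
      using a0pos by auto
    obtain F where F: "a0 \<le> F" "F \<le> 2" "F - psi1 F s = 0"
      using IVT'[of "\<lambda>a. a - psi1 a s" a0 0 2, OF _ _ a02 cont] pa0 p2 by auto
    have Fpos: "0 < F" using F a0pos by simp
    have hF: "hh F s = 1" using fix_iff[OF Fpos, of s] F by simp
    have small: "\<And>a. 0 < a \<Longrightarrow> a < F \<Longrightarrow> 1 < hh a s"
      using hh_strict[OF s0] hF by (metis less_le)
    have big: "\<And>a. F < a \<Longrightarrow> hh a s < 1"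
      using hh_strict[OF s0] hF Fpos by (metis less_le)
    show "\<exists>F>0. {a. a \<ge> 0 \<and> a = psi1 a s} = {0, F}
               \<and> (\<forall>a. 0 < a \<and> a < F \<longrightarrow> a < psi1 a s \<and> psi1 a s < F)
               \<and> (\<forall>a. a > F \<longrightarrow> F < psi1 a s \<and> psi1 a s < a)"
    proof (intro exI[of _ F] conjI allI impI)
      show "0 < F" by (rule Fpos)
      show "{a. a \<ge> 0 \<and> a = psi1 a s} = {0, F}"
      proof
        show "{a. a \<ge> 0 \<and> a = psi1 a s} \<subseteq> {0, F}"
        proof
          fix a assume "a \<in> {a. a \<ge> 0 \<and> a = psi1 a s}"
          hence a: "0 \<le> a" "a = psi1 a s" by auto
          show "a \<in> {0, F}"
          proof (cases "a = 0")
            case False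
            hence ap: "0 < a" using a by simp
            have "\<not> a < F" using small[OF ap] gt[OF ap] a by force
            moreover have "\<not> F < a" using big lt[OF ap] a by force
            ultimately show ?thesis by simp
          qed simp
        qed
        show "{0, F} \<subseteq> {a. a \<ge> 0 \<and> a = psi1 a s}"
          using psi0 F Fpos by auto
      qed
    next
      fix a assume a: "0 < a \<and> a < F"
      show "a < psi1 a s" using gt small a by blast
      show "psi1 a s < F" using psi_mono[OF s0, of a F] a F by simp
    next
      fix a assume a: "F < a"
      show "psi1 a s < a" using lt big a Fpos by auto
      show "F < psi1 a s" using psi_mono[OF s0, of F a] a F Fpos by simp
    qed
  qed
  have D: "\<forall>s::real. s \<ge> pi^2/16 \<longrightarrow>
            {a. a \<ge> 0 \<and> a = psi1 a s} = {0}
            \<and> (\<forall>a. a > 0 \<longrightarrow> 0 < psi1 a s \<and> psi1 a s < a)"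
  proof (intro allI impI)
    fix s :: real assume hs: "s \<ge> pi^2/16"
    have s0: "0 < s" using hs pi_gt_zero by (smt (verit) zero_less_power divide_pos_pos)
    have "(pi/4)^2 \<le> s" using hs by (simp add: power_divide)
    hence "sqrt ((pi/4)^2) \<le> sqrt s" by (rule real_sqrt_le_mono)
    hence sq: "pi/4 \<le> sqrt s" by simp
    have "0 < sqrt s" using s0 by simp
    hence h0: "hh 0 s \<le> 1" using sq hh0 by simp
    have key: "\<And>a. 0 < a \<Longrightarrow> 0 < psi1 a s \<and> psi1 a s < a"
    proof -
      fix a :: real assume a: "0 < a"
      have "hh a s < 1" using hh_strict[OF s0 _ a] h0 by simp
      thus "0 < psi1 a s \<and> psi1 a s < a" using lt a psi_mono[OF s0, of 0 a] psi0 by auto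
    qed
    show "{a. a \<ge> 0 \<and> a = psi1 a s} = {0} \<and> (\<forall>a. a > 0 \<longrightarrow> 0 < psi1 a s \<and> psi1 a s < a)"
    proof (intro conjI allI impI)
      show "{a. a \<ge> 0 \<and> a = psi1 a s} = {0}"
        using key psi0 by (force simp: less_le)
    qed (use key in auto)
  qed
  show ?thesis using A B C D by blast
qed

end
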